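(* Let $d_1,d_2\in\mathbb N$, $d=d_1+d_2$, and write $\mathbb R^d=\mathbb R^{d_1}\times\mathbb R^{d_2}$, with $\pi_1:\mathbb R^d\to\mathbb R^{d_1}$ the orthogonal projection. Let $K\subseteq\mathbb R^d$ be an origin-symmetric convex body and let $T=T_1\times\mathbb R^{d_2}$, where $T_1\subseteq\mathbb R^{d_1}$ is a convex body. For $s\in\mathbb R^{d_1}$ define $f(s)=\gamma_{d_2}(\{y\in\mathbb R^{d_2}:(s,y)\in K\})$. Assume that for every $z>0$, the set $A_z=\{s\in\pi_1(K): f(s)\ge z\}$ satisfies \[ \gamma_{d_1}(\mathrm{conv}\{A_z\cup T_1\})\,\gamma_{d_1}(A_z\cap T_1)\ge \gamma_{d_1}(A_z)\,\gamma_{d_1}(T_1). \] Then \[ \gamma_{d}(\mathrm{conv}\{K\cup T\})\,\gamma_{d}(K\cap T)\ge \gamma_{d}(K)\,\gamma_{d}(T). \]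
   Context: $\gamma_m$ denotes the standard Gaussian probability measure on $\mathbb R^m$, with density proportional to $e^{-\|x\|^2/2}$. $\mathrm{conv}\{S\}$ is the convex hull of $S$. A set $K$ is origin-symmetric if $K=-K$. *)

theory Defs
  imports "HOL-Analysis.Analysis"
begin

definition std_gaussian :: "'a::euclidean_space measure" where
  "std_gaussian = density lebesgue
     (\<lambda>x. ennreal (exp (- (norm x)\<^sup>2 / 2) / (2 * pi) powr (real DIM('a) / 2)))"

definition gauss :: "'a::euclidean_space set \<Rightarrow> real" where
  "gauss S = measure std_gaussian S"

definition convex_body :: "'a::euclidean_space set \<Rightarrow> bool" where
  "convex_body K \<longleftrightarrow> compact K \<and> convex K \<and> interior K \<noteq> {}"

end

theory Submission imports Defs "HOL-Probability.Distributions" begin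


definition gd :: "'a::euclidean_space \<Rightarrow> ennreal" where
  "gd x = ennreal (exp (- (norm x)\<^sup>2 / 2) / (2 * pi) powr (real DIM('a) / 2))"

definition GB :: "'a::euclidean_space measure" where "GB = density lborel gd"

lemma gd_meas[measurable]: "gd \<in> borel_measurable borel"
  unfolding gd_def[abs_def] by measurable

lemma sets_GB[simp, measurable_cong]: "sets GB = sets borel"
  by (simp add: GB_def)
lemma space_GB[simp]: "space GB = UNIV"
  by (simp add: GB_def)

lemma std_gaussian_eq: "std_gaussian = density lebesgue gd"
  unfolding std_gaussian_def gd_def[abs_def] ..

lemma gd_prod: "gd (x::'a::euclidean_space) = (\<Prod>b\<in>Basis. ennreal (std_normal_density (x \<bullet> b)))"
proof -
  have n: "(norm x)\<^sup>2 = (\<Sum>b\<in>Basis. (x \<bullet> b)\<^sup>2)"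
    unfolding power2_norm_eq_inner by (subst euclidean_inner) (simp add: power2_eq_square)
  have p: "(2 * pi) powr (real DIM('a) / 2) = (\<Prod>b\<in>(Basis::'a set). sqrt (2*pi))"
  proof -
    have "(2 * pi) powr (real DIM('a) / 2) = ((2*pi) powr (1/2)) ^ DIM('a)"
      by (simp add: powr_realpow[symmetric] powr_powr)
    also have "\<dots> = (\<Prod>b\<in>(Basis::'a set). sqrt (2*pi))"
      by (simp add: powr_half_sqrt)
    finally show ?thesis .
  qed
  have e: "exp (- (\<Sum>b\<in>Basis. (x \<bullet> b)\<^sup>2) / 2) = (\<Prod>b\<in>(Basis::'a set). exp (- (x \<bullet> b)\<^sup>2 / 2))"
  proof -
    have "- (\<Sum>b\<in>Basis. (x \<bullet> b)\<^sup>2) / 2 = (\<Sum>b\<in>(Basis::'a set). - (x \<bullet> b)\<^sup>2 / 2)"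
      by (simp add: sum_divide_distrib sum_negf)
    then show ?thesis by (simp add: exp_sum)
  qed
  have "exp (- (norm x)\<^sup>2 / 2) / (2 * pi) powr (real DIM('a) / 2)
     = (\<Prod>b\<in>Basis. exp (- (x \<bullet> b)\<^sup>2 / 2)) / (\<Prod>b\<in>(Basis::'a set). sqrt (2*pi))"
    unfolding n p e ..
  also have "\<dots> = (\<Prod>b\<in>Basis. exp (- (x \<bullet> b)\<^sup>2 / 2) / sqrt (2*pi))"
    by (rule prod_dividef[symmetric])
  also have "\<dots> = (\<Prod>b\<in>Basis. std_normal_density (x \<bullet> b))"
    by (rule prod.cong) (simp_all add: std_normal_density_def)
  finally show ?thesis unfolding gd_def
    by (simp add: prod_ennreal)
qed

lemma GB_UNIV: "emeasure (GB::'a::euclidean_space measure) UNIV = 1"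
proof -
  have "emeasure (GB::'a measure) UNIV = (\<integral>\<^sup>+x. gd x \<partial>(lborel::'a measure))"
    by (simp add: GB_def emeasure_density)
  also have "\<dots> = (\<Prod>b\<in>(Basis::'a set). (\<integral>\<^sup>+x. ennreal (std_normal_density x) \<partial>lborel))"
    unfolding gd_prod by (rule nn_integral_lborel_prod) auto
  also have "\<dots> = 1"
  proof -
    have "prob_space (density lborel (\<lambda>x. ennreal (normal_density 0 1 x)))"
      by (rule prob_space_normal_density) simp
    then have "emeasure (density lborel (\<lambda>x. ennreal (normal_density 0 1 x))) (space (density lborel (\<lambda>x. ennreal (normal_density 0 1 x)))) = 1"
      by (rule prob_space.emeasure_space_1)
    then have "emeasure (density lborel (\<lambda>x. ennreal (std_normal_density x))) UNIV = 1"
      by simp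
    then have "(\<integral>\<^sup>+x. ennreal (std_normal_density x) \<partial>lborel) = 1"
      by (simp add: emeasure_density)
    then show ?thesis by simp
  qed
  finally show ?thesis .
qed

lemma prob_GB: "prob_space GB"
  by (rule prob_spaceI) (simp add: GB_UNIV)

interpretation GBp: prob_space "GB::'a::euclidean_space measure" by (rule prob_GB)

lemma gd_leb[measurable]: "gd \<in> borel_measurable lebesgue"
  by (rule measurable_completion) simp

lemma std_gaussian_borel: "S \<in> sets borel \<Longrightarrow> emeasure std_gaussian S = emeasure GB S"
proof -
  assume S: "S \<in> sets borel"
  then have S': "S \<in> sets lebesgue" by (simp add: sets_completionI_sets)
  have "emeasure std_gaussian S = (\<integral>\<^sup>+x. gd x * indicator S x \<partial>lebesgue)"
    using S' by (simp add: std_gaussian_eq emeasure_density)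
  also have "\<dots> = (\<integral>\<^sup>+x. gd x * indicator S x \<partial>lborel)"
    by (rule nn_integral_completion)
  also have "\<dots> = emeasure GB S" using S by (simp add: GB_def emeasure_density)
  finally show ?thesis .
qed

lemma std_gaussian_UNIV: "emeasure (std_gaussian::'a::euclidean_space measure) UNIV = 1"
proof -
  have "emeasure (std_gaussian::'a measure) UNIV = emeasure (GB::'a measure) UNIV"
    by (rule std_gaussian_borel) simp
  then show ?thesis using GB_UNIV by simp
qed

lemma space_sg[simp]: "space std_gaussian = UNIV" by (simp add: std_gaussian_eq)
lemma prob_sg: "prob_space (std_gaussian::'a::euclidean_space measure)"
  by (rule prob_spaceI) (simp add: std_gaussian_UNIV)

lemma sets_sg[simp]: "sets std_gaussian = sets lebesgue"
  by (simp add: std_gaussian_eq)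

lemma gauss_borel: "S \<in> sets borel \<Longrightarrow> gauss S = measure GB S"
  by (simp add: gauss_def measure_def std_gaussian_borel)



lemma gd_pair: "gd ((x::'a::euclidean_space), (y::'b::euclidean_space)) = gd x * gd y"
proof -
  have "exp (- (norm (x,y))\<^sup>2 / 2) / (2 * pi) powr (real DIM('a \<times> 'b) / 2)
     = (exp (- (norm x)\<^sup>2 / 2) / (2 * pi) powr (real DIM('a) / 2)) *
       (exp (- (norm y)\<^sup>2 / 2) / (2 * pi) powr (real DIM('b) / 2))"
  proof -
    have a: "- (norm (x,y))\<^sup>2 / 2 = - (norm x)\<^sup>2 / 2 + - (norm y)\<^sup>2 / 2"
      by (simp add: norm_Pair)
    have b: "(2 * pi) powr (real DIM('a \<times> 'b) / 2) = (2 * pi) powr (real DIM('a) / 2) * (2 * pi) powr (real DIM('b) / 2)"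
      by (simp add: powr_add[symmetric] add_divide_distrib)
    show ?thesis unfolding a b exp_add by simp
  qed
  then show ?thesis unfolding gd_def by (simp add: ennreal_mult[symmetric])
qed

lemma GB_prod: "(GB :: ('a::euclidean_space \<times> 'b::euclidean_space) measure) = GB \<Otimes>\<^sub>M GB"
proof -
  have "(GB::'a measure) \<Otimes>\<^sub>M (GB::'b measure) = density (lborel \<Otimes>\<^sub>M lborel) (\<lambda>(x,y). gd x * gd y)"
    unfolding GB_def
    by (rule pair_measure_density) (auto intro: prob_space_imp_sigma_finite prob_GB[unfolded GB_def] lborel.sigma_finite_measure_axioms)
  also have "\<dots> = GB"
  proof -
    have e: "(\<lambda>(x,y). gd x * gd y) = (gd :: ('a\<times>'b) \<Rightarrow> ennreal)"
      by (auto simp: gd_pair fun_eq_iff)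
    show ?thesis unfolding lborel_prod GB_def e ..
  qed
  finally show ?thesis ..
qed

interpretation GBpair: pair_prob_space "GB::'a::euclidean_space measure" "GB::'b::euclidean_space measure" ..

lemma layer_cake:
  fixes f :: "'a::euclidean_space \<Rightarrow> real"
  assumes f[measurable]: "f \<in> borel_measurable borel" and nn: "\<And>x. f x \<ge> 0"
  shows "(\<integral>\<^sup>+x. ennreal (f x) \<partial>GB) = (\<integral>\<^sup>+z. emeasure GB {x. z \<le> f x} * indicator {0<..} z \<partial>lborel)"
proof -
  interpret P: pair_sigma_finite "GB::'a measure" "lborel::real measure"
    by (rule pair_sigma_finite.intro[OF prob_space_imp_sigma_finite[OF prob_GB] lborel.sigma_finite_measure_axioms])
  have 1: "ennreal (f x) = (\<integral>\<^sup>+z. indicator {z. 0 < z \<and> z \<le> f x} z \<partial>lborel)" for x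
  proof -
    have "{z. 0 < z \<and> z \<le> f x} = {0<..f x}" by auto
    then show ?thesis using nn[of x] by simp
  qed
  have 2: "emeasure GB {x. z \<le> f x} * indicator {0<..} z = (\<integral>\<^sup>+x. indicator {z. 0 < z \<and> z \<le> f x} z \<partial>GB)" for z
  proof -
    have "(\<lambda>x. indicator {z. 0 < z \<and> z \<le> f x} z :: ennreal) = (\<lambda>x. indicator {0<..} z * indicator {x. z \<le> f x} x)"
      by (auto simp: indicator_def)
    moreover have "{x. z \<le> f x} \<in> sets GB" by simp
    ultimately show ?thesis by (simp add: nn_integral_cmult mult.commute)
  qed
  have m: "(\<lambda>(x, z). indicator {z. 0 < z \<and> z \<le> f x} z :: ennreal) \<in> borel_measurable (GB \<Otimes>\<^sub>M lborel)"
  proof -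
    have "(\<lambda>(x, z). indicator {z. 0 < z \<and> z \<le> f x} z :: ennreal) = (\<lambda>p. indicator {p. 0 < snd p \<and> snd p \<le> f (fst p)} p)"
      by (auto simp: indicator_def fun_eq_iff)
    moreover have "{p. 0 < snd p \<and> snd p \<le> f (fst p)} \<in> sets (GB \<Otimes>\<^sub>M lborel)"
    proof -
      have "(\<lambda>p. f (fst p)) \<in> borel_measurable (GB \<Otimes>\<^sub>M lborel)"
        by (rule measurable_compose[OF measurable_fst]) simp
      moreover have "snd \<in> borel_measurable (GB \<Otimes>\<^sub>M (lborel::real measure))"
        by (rule measurable_compose[OF measurable_snd]) simp
      ultimately have "{p \<in> space (GB \<Otimes>\<^sub>M lborel). 0 < snd p \<and> snd p \<le> f (fst p)} \<in> sets (GB \<Otimes>\<^sub>M lborel)"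
        by measurable
      then show ?thesis by (simp add: space_pair_measure)
    qed
    ultimately show ?thesis by simp
  qed
  show ?thesis
    unfolding 1 2 using P.Fubini'[OF m] by simp
qed



lemma convex_null: "convex (C::'a::euclidean_space set) \<Longrightarrow> C - interior C \<in> null_sets lebesgue"
proof -
  assume "convex C"
  then have "negligible (frontier C)" by (rule negligible_convex_frontier)
  moreover have "C - interior C \<subseteq> frontier C"
    using closure_subset by (auto simp: frontier_def)
  ultimately have "negligible (C - interior C)" by (rule negligible_subset)
  then show ?thesis by (simp add: negligible_iff_null_sets)
qed

lemma convex_leb: "convex (C::'a::euclidean_space set) \<Longrightarrow> C \<in> sets lebesgue"
proof -
  assume c: "convex C"
  have "C = interior C \<union> (C - interior C)" using interior_subset by auto
  moreover have "interior C \<in> sets lebesgue" by (simp add: sets_completionI_sets)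
  moreover have "C - interior C \<in> sets lebesgue" using convex_null[OF c] by auto
  ultimately show ?thesis by (metis sets.Un)
qed

lemma gauss_interior: "convex (C::'a::euclidean_space set) \<Longrightarrow> gauss C = gauss (interior C)"
proof -
  assume c: "convex C"
  interpret S: prob_space "std_gaussian::'a measure" by (rule prob_sg)
  have N: "C - interior C \<in> null_sets std_gaussian"
  proof -
    have "AE x in lebesgue. x \<notin> C - interior C" using convex_null[OF c] by (rule AE_not_in)
    then show ?thesis unfolding std_gaussian_eq
      using convex_null[OF c] by (subst null_sets_density_iff) (auto elim: AE_mp)
  qed
  have "measure std_gaussian (C - (C - interior C)) = measure std_gaussian C"
    by (rule measure_Diff_null_set[OF _ N]) (simp add: convex_leb[OF c])
  moreover have "C - (C - interior C) = interior C" using interior_subset by auto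
  ultimately show ?thesis by (simp add: gauss_def)
qed

lemma geom:
  fixes K :: "('a::euclidean_space \<times> 'b::euclidean_space) set"
  assumes t0: "t0 \<in> T1" and A: "A \<subseteq> fst ` K"
  shows "interior (convex hull (A \<union> T1)) \<times> UNIV \<subseteq> convex hull (K \<union> T1 \<times> UNIV)"
proof clarify
  fix s y assume s: "s \<in> interior (convex hull (A \<union> T1))"
  let ?H = "convex hull (K \<union> T1 \<times> (UNIV::'b set))"
  have TH: "T1 \<times> UNIV \<subseteq> ?H" by (rule subset_trans[OF _ hull_subset]) auto
  show "(s, y) \<in> ?H"
  proof (cases "s = t0")
    case True then show ?thesis using TH t0 by auto
  next
    case False
    then have ns: "norm (s - t0) > 0" by simp
    obtain e where e: "e > 0" "ball s e \<subseteq> convex hull (A \<union> T1)"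
      using s by (meson open_contains_ball open_interior interior_subset subset_trans)
    define d where "d = e / (2 * norm (s - t0))"
    have d: "d > 0" using e ns by (simp add: d_def)
    define s' where "s' = s + d *\<^sub>R (s - t0)"
    have "dist s s' = d * norm (s - t0)" using d by (simp add: s'_def dist_norm)
    also have "\<dots> = e / 2" using ns by (simp add: d_def)
    finally have "dist s s' = e / 2" .
    then have "s' \<in> ball s e" using e by simp
    then have s'C: "s' \<in> convex hull (A \<union> T1)" using e by auto
    have "convex hull (A \<union> T1) \<subseteq> convex hull (fst ` (K \<union> T1 \<times> (UNIV::'b set)))"
    proof (rule hull_mono)
      have "fst ` (K \<union> T1 \<times> (UNIV::'b set)) = fst ` K \<union> T1" by (simp add: image_Un)
      then show "A \<union> T1 \<subseteq> fst ` (K \<union> T1 \<times> (UNIV::'b set))" using A by blast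
    qed
    also have "\<dots> = fst ` ?H"
      by (rule convex_hull_linear_image[symmetric]) (rule linear_fst)
    finally obtain y' where y': "(s', y') \<in> ?H" using s'C by force
    define m where "m = 1 / (1 + d)"
    have m: "0 < m" "m < 1" using d by (auto simp: m_def)
    define w where "w = (1 / (1 - m)) *\<^sub>R (y - m *\<^sub>R y')"
    have "(t0, w) \<in> ?H" using TH t0 by auto
    then have in_H: "m *\<^sub>R (s', y') + (1 - m) *\<^sub>R (t0, w) \<in> ?H"
      using y' m by (intro convexD[OF convex_convex_hull]) auto
    have e1: "m *\<^sub>R s' + (1 - m) *\<^sub>R t0 = s"
    proof -
      have "m *\<^sub>R s' + (1 - m) *\<^sub>R t0 = (m * (1 + d)) *\<^sub>R s + (1 - m - m * d) *\<^sub>R t0"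
        by (simp add: s'_def algebra_simps)
      also have "m * (1 + d) = 1" using d by (simp add: m_def)
      also have "1 - m - m * d = 0" using d by (simp add: m_def field_simps)
      finally show ?thesis by simp
    qed
    have e2: "m *\<^sub>R y' + (1 - m) *\<^sub>R w = y"
    proof -
      have "(1 - m) *\<^sub>R w = y - m *\<^sub>R y'" using m by (simp add: w_def)
      then show ?thesis by simp
    qed
    have "m *\<^sub>R (s', y') + (1 - m) *\<^sub>R (t0, w) = (s, y)"
      using e1 e2 by simp
    then show ?thesis using in_H by simp
  qed
qed



lemma borel_prod_sets: "B \<in> sets (borel::('a::euclidean_space\<times>'b::euclidean_space) measure) \<Longrightarrow> B \<in> sets ((GB::'a measure) \<Otimes>\<^sub>M (GB::'b measure))"
  by (subst GB_prod[symmetric]) simp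

lemma emeasure_prod_fib: "B \<in> sets (borel::('a::euclidean_space\<times>'b::euclidean_space) measure) \<Longrightarrow>
  emeasure GB B = (\<integral>\<^sup>+s. emeasure (GB::'b measure) (Pair s -` B) \<partial>(GB::'a measure))"
proof -
  assume B: "B \<in> sets borel"
  have "emeasure (GB::('a\<times>'b) measure) B = emeasure ((GB::'a measure) \<Otimes>\<^sub>M (GB::'b measure)) B"
    by (rule arg_cong[where f="\<lambda>M. emeasure M B", OF GB_prod])
  also have "\<dots> = (\<integral>\<^sup>+s. emeasure (GB::'b measure) (Pair s -` B) \<partial>(GB::'a measure))"
    by (rule GBp.emeasure_pair_measure_alt[OF borel_prod_sets[OF B]])
  finally show ?thesis .
qed

lemma emeasure_prod_Times: "A \<in> sets (borel::'a::euclidean_space measure) \<Longrightarrow>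
  emeasure (GB::('a\<times>'b::euclidean_space) measure) (A \<times> UNIV) = emeasure GB A"
proof -
  assume A: "A \<in> sets borel"
  have "emeasure (GB::('a\<times>'b) measure) (A \<times> UNIV) = emeasure ((GB::'a measure) \<Otimes>\<^sub>M (GB::'b measure)) (A \<times> UNIV)"
    by (rule arg_cong[where f="\<lambda>M. emeasure M (A \<times> UNIV)", OF GB_prod])
  also have "\<dots> = emeasure GB A * emeasure (GB::'b measure) UNIV"
    by (rule GBp.emeasure_pair_measure_Times) (use A in simp_all)
  finally show ?thesis by (simp add: GB_UNIV)
qed

theorem lemma3p1:
  fixes K :: "('a::euclidean_space \<times> 'b::euclidean_space) set"
    and T1 :: "'a set"
  assumes K_body: "convex_body K"
    and K_sym: "uminus ` K = K"
    and T1_body: "convex_body T1"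
    and hyp: "\<And>z::real. z > 0 \<Longrightarrow>
      (let A = {s \<in> fst ` K. gauss {y. (s, y) \<in> K} \<ge> z} in
        gauss (convex hull (A \<union> T1)) * gauss (A \<inter> T1) \<ge> gauss A * gauss T1)"
  shows "gauss (convex hull (K \<union> T1 \<times> UNIV)) * gauss (K \<inter> T1 \<times> UNIV)
           \<ge> gauss K * gauss (T1 \<times> (UNIV :: 'b set))"
proof -
  define F where "F s = measure (GB::'b measure) (Pair s -` K)" for s
  have Kb[measurable]: "K \<in> sets borel" using K_body by (simp add: convex_body_def borel_compact)
  have T1b[measurable]: "T1 \<in> sets borel" using T1_body by (simp add: convex_body_def borel_compact)
  have TUb: "T1 \<times> (UNIV::'b set) \<in> sets borel"
  proof -
    have "closed (T1 \<times> (UNIV::'b set))" using T1_body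
      by (intro closed_Times) (auto simp: convex_body_def compact_imp_closed)
    then show ?thesis by (simp add: borel_closed)
  qed
  have KTb: "K \<inter> T1 \<times> (UNIV::'b set) \<in> sets borel" using Kb TUb by simp
  have gT: "gauss (T1 \<times> (UNIV::'b set)) = measure GB T1"
    unfolding gauss_borel[OF TUb] measure_def emeasure_prod_Times[OF T1b] ..
  obtain t0 where t0: "t0 \<in> T1" using T1_body interior_subset by (fastforce simp: convex_body_def)
  have fib: "Pair s -` K \<in> sets borel" for s
    using sets_Pair1[OF borel_prod_sets[OF Kb]] by simp
  have gaussF: "gauss {y. (s, y) \<in> K} = F s" for s
    using gauss_borel[OF fib[of s]] by (simp add: F_def vimage_def)
  have Fm[measurable]: "F \<in> borel_measurable borel"
  proof -
    have "(\<lambda>s. emeasure (GB::'b measure) (Pair s -` K)) \<in> borel_measurable (GB::'a measure)"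
      by (rule GBp.measurable_emeasure_Pair[OF borel_prod_sets[OF Kb]])
    then have "(\<lambda>s. emeasure (GB::'b measure) (Pair s -` K)) \<in> borel_measurable (borel::'a measure)"
      by (simp add: measurable_cong_sets[OF sets_GB refl])
    then show ?thesis unfolding F_def measure_def by measurable
  qed
  have Fnn: "F s \<ge> 0" for s by (simp add: F_def)
  define Az where "Az z = {s. z \<le> F s}" for z
  have Azb[measurable]: "Az z \<in> sets borel" for z unfolding Az_def by measurable
  have AzK: "Az z \<subseteq> fst ` K" if "z > 0" for z
  proof
    fix s assume "s \<in> Az z"
    then have "F s > 0" using that by (simp add: Az_def)
    then have "Pair s -` K \<noteq> {}" by (auto simp: F_def)
    then show "s \<in> fst ` K" by force
  qed
  have hz: "gauss (convex hull (Az z \<union> T1)) * measure GB (Az z \<inter> T1) \<ge> measure GB (Az z) * measure GB T1"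
    if z: "z > 0" for z
  proof -
    have "{s \<in> fst ` K. gauss {y. (s, y) \<in> K} \<ge> z} = Az z"
      using AzK[OF z] by (auto simp: gaussF Az_def)
    then show ?thesis using hyp[OF z] by (simp add: gauss_borel Let_def)
  qed
  have MAz[measurable]: "(\<lambda>z. measure GB (Az z)) \<in> borel_measurable borel"
  proof -
    have "mono (\<lambda>z. - measure GB (Az z))"
      by (auto simp: mono_def Az_def intro!: GBp.finite_measure_mono)
    then have "(\<lambda>z. - measure GB (Az z)) \<in> borel_measurable borel" by (rule borel_measurable_mono)
    then show ?thesis using borel_measurable_uminus_eq by blast
  qed
  have MAzT[measurable]: "(\<lambda>z. measure GB (Az z \<inter> T1)) \<in> borel_measurable borel"
  proof -
    have "mono (\<lambda>z. - measure GB (Az z \<inter> T1))"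
      by (auto simp: mono_def Az_def intro!: GBp.finite_measure_mono)
    then have "(\<lambda>z. - measure GB (Az z \<inter> T1)) \<in> borel_measurable borel" by (rule borel_measurable_mono)
    then show ?thesis using borel_measurable_uminus_eq by blast
  qed
  let ?H = "convex hull (K \<union> T1 \<times> (UNIV::'b set))"
  define c where "c = gauss ?H"
  have c0: "c \<ge> 0" by (simp add: c_def gauss_def)
  have Cz: "gauss (convex hull (Az z \<union> T1)) \<le> c" if z: "z > 0" for z
  proof -
    let ?C = "convex hull (Az z \<union> T1)"
    interpret S: prob_space "std_gaussian::('a\<times>'b) measure" by (rule prob_sg)
    have "gauss ?C = gauss (interior ?C)" by (rule gauss_interior) simp
    also have "\<dots> = measure GB (interior ?C)" by (rule gauss_borel) simp
    also have "\<dots> = measure (GB::('a\<times>'b) measure) (interior ?C \<times> UNIV)"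
      by (simp add: measure_def emeasure_prod_Times)
    also have "\<dots> = gauss (interior ?C \<times> (UNIV::'b set))"
      by (rule gauss_borel[symmetric]) (simp add: borel_open open_Times)
    also have "\<dots> \<le> c" unfolding c_def gauss_def
      by (rule S.finite_measure_mono[OF geom[OF t0 AzK[OF z]]]) (simp add: convex_leb)
    finally show ?thesis .
  qed
  have L1: "(\<integral>\<^sup>+s. ennreal (F s) \<partial>GB) = (\<integral>\<^sup>+z. ennreal (measure GB (Az z)) * indicator {0<..} z \<partial>lborel)"
    by (subst layer_cake[OF Fm Fnn]) (simp add: Az_def GBp.emeasure_eq_measure)
  have L2: "(\<integral>\<^sup>+s. ennreal (F s * indicator T1 s) \<partial>GB) = (\<integral>\<^sup>+z. ennreal (measure GB (Az z \<inter> T1)) * indicator {0<..} z \<partial>lborel)"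
  proof -
    have "(\<integral>\<^sup>+s. ennreal (F s * indicator T1 s) \<partial>GB) = (\<integral>\<^sup>+z. emeasure GB {s. z \<le> F s * indicator T1 s} * indicator {0<..} z \<partial>lborel)"
      by (rule layer_cake) (auto simp: Fnn)
    also have "\<dots> = (\<integral>\<^sup>+z. ennreal (measure GB (Az z \<inter> T1)) * indicator {0<..} z \<partial>lborel)"
    proof (rule nn_integral_cong)
      fix z :: real
      show "emeasure GB {s. z \<le> F s * indicator T1 s} * indicator {0<..} z = ennreal (measure GB (Az z \<inter> T1)) * indicator {0<..} z"
      proof (cases "z > 0")
        case True
        then have "{s. z \<le> F s * indicator T1 s} = Az z \<inter> T1"
          by (auto simp: Az_def indicator_def)
        then show ?thesis by (simp add: GBp.emeasure_eq_measure)
      qed simp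
    qed
    finally show ?thesis .
  qed
  have hK: "emeasure GB K = (\<integral>\<^sup>+s. ennreal (F s) \<partial>GB)"
  proof -
    have "emeasure GB K = (\<integral>\<^sup>+s. emeasure (GB::'b measure) (Pair s -` K) \<partial>(GB::'a measure))"
      by (rule emeasure_prod_fib[OF Kb])
    also have "\<dots> = (\<integral>\<^sup>+s. ennreal (F s) \<partial>GB)"
      by (simp add: F_def GBp.emeasure_eq_measure)
    finally show ?thesis .
  qed
  have hKT: "emeasure GB (K \<inter> T1 \<times> UNIV) = (\<integral>\<^sup>+s. ennreal (F s * indicator T1 s) \<partial>GB)"
  proof -
    have P: "Pair s -` (K \<inter> T1 \<times> UNIV) = (if s \<in> T1 then Pair s -` K else {})" for s by auto
    have "emeasure GB (K \<inter> T1 \<times> UNIV) = (\<integral>\<^sup>+s. emeasure (GB::'b measure) (Pair s -` (K \<inter> T1 \<times> UNIV)) \<partial>(GB::'a measure))"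
      using KTb by (rule emeasure_prod_fib)
    also have "\<dots> = (\<integral>\<^sup>+s. ennreal (F s * indicator T1 s) \<partial>GB)"
      by (rule nn_integral_cong) (simp add: P F_def GBp.emeasure_eq_measure indicator_def)
    finally show ?thesis .
  qed
  have "ennreal (gauss K * gauss (T1 \<times> (UNIV::'b set))) = ennreal (measure GB T1) * emeasure GB K"
    unfolding gT gauss_borel[OF Kb] by (simp add: GBp.emeasure_eq_measure ennreal_mult mult.commute)
  also have "\<dots> = (\<integral>\<^sup>+z. ennreal (measure GB (Az z) * measure GB T1) * indicator {0<..} z \<partial>lborel)"
    unfolding hK L1 by (simp add: nn_integral_cmult[symmetric] ennreal_mult mult_ac)
  also have "\<dots> \<le> (\<integral>\<^sup>+z. ennreal (c * measure GB (Az z \<inter> T1)) * indicator {0<..} z \<partial>lborel)"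
  proof (rule nn_integral_mono)
    fix z :: real
    show "ennreal (measure GB (Az z) * measure GB T1) * indicator {0<..} z \<le> ennreal (c * measure GB (Az z \<inter> T1)) * indicator {0<..} z"
    proof (cases "z > 0")
      case True
      have "measure GB (Az z) * measure GB T1 \<le> gauss (convex hull (Az z \<union> T1)) * measure GB (Az z \<inter> T1)"
        by (rule hz[OF True])
      also have "\<dots> \<le> c * measure GB (Az z \<inter> T1)"
        by (rule mult_right_mono[OF Cz[OF True]]) simp
      finally show ?thesis using True by (simp add: ennreal_leI)
    qed simp
  qed
  also have "\<dots> = ennreal c * emeasure GB (K \<inter> T1 \<times> UNIV)"
    unfolding hKT L2 using c0 by (simp add: nn_integral_cmult[symmetric] ennreal_mult mult_ac)
  also have "\<dots> = ennreal (c * gauss (K \<inter> T1 \<times> UNIV))"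
    using c0 unfolding gauss_borel[OF KTb] by (simp add: GBp.emeasure_eq_measure ennreal_mult)
  finally have "gauss K * gauss (T1 \<times> (UNIV::'b set)) \<le> c * gauss (K \<inter> T1 \<times> UNIV)"
    using c0 by (subst (asm) ennreal_le_iff) (auto simp: gauss_def)
  then show ?thesis by (simp add: c_def)
qed


end
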